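(* Let $t\geq 2$ be an integer. There are a positive constant $c$ and $n_0\in\mathbb{N}$ such that for every $n>n_0$: $$\mathrm{IR}(2K_2, K_{1,n}) \leq n + c\, n \log^{-1/4} n,\qquad \mathrm{IR}(P_4, K_{1,n}) \leq n + c\, n\log^{-1/4} n,\qquad \mathrm{IR}(K_{t,t}, K_{1,n}) \leq n + c\, n^{1-\frac{1}{2t}}.$$
   Context: All graphs are finite and simple. $K_{1,n}$ is the star with $n$ edges, $2K_2$ is the disjoint union of two edges, $P_4$ is the path on $4$ vertices, $K_{t,t}$ is the complete bipartite graph with parts of size $t$. For graphs $F$, $H$, $G$, write $F \overset{\text{ind}}{\longrightarrow} (H,G)$ if for every coloring of the edges of $F$ with red and blue there is either a red induced copy of $H$ (a vertex set $S\subseteq V(F)$ with $F[S]\cong H$ and all edges of $F[S]$ red) or a blue induced copy of $G$ (defined analogously with blue). The induced Ramsey number $\mathrm{IR}(H,G)$ is the smallest number of vertices of a graph $F$ with $F \overset{\text{ind}}{\longrightarrow} (H,G)$. *)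

theory Defs
  imports Complex_Main
begin

definition simple_graph :: "'a set \<Rightarrow> 'a set set \<Rightarrow> bool" where
  "simple_graph V E \<longleftrightarrow> finite V \<and> (\<forall>e\<in>E. \<exists>u v. u \<in> V \<and> v \<in> V \<and> u \<noteq> v \<and> e = {u, v})"

definition mono_induced_copy ::
  "'b set \<Rightarrow> 'b set set \<Rightarrow> 'a set \<Rightarrow> 'a set set \<Rightarrow> ('a set \<Rightarrow> bool) \<Rightarrow> bool \<Rightarrow> bool" where
  "mono_induced_copy VH EH VF EF col c \<longleftrightarrow>
     (\<exists>S f. S \<subseteq> VF \<and> bij_betw f VH S \<and>
        (\<forall>u\<in>VH. \<forall>v\<in>VH. ({u, v} \<in> EH \<longleftrightarrow> {f u, f v} \<in> EF)) \<and>
        (\<forall>e\<in>EF. e \<subseteq> S \<longrightarrow> col e = c))"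

text \<open>F ind-arrows (H, G): every red/blue colouring (True = red, False = blue) of the
  edges of F yields a red induced H or a blue induced G.\<close>

definition ind_arrows ::
  "'a set \<Rightarrow> 'a set set \<Rightarrow> 'b set \<Rightarrow> 'b set set \<Rightarrow> 'c set \<Rightarrow> 'c set set \<Rightarrow> bool" where
  "ind_arrows VF EF VH EH VG EG \<longleftrightarrow>
     (\<forall>col :: 'a set \<Rightarrow> bool.
        mono_induced_copy VH EH VF EF col True \<or> mono_induced_copy VG EG VF EF col False)"

text \<open>Induced Ramsey number: least number of vertices of a graph F with F ind-arrows (H,G).
  Every finite graph is isomorphic to one on vertex set {0..<N}.\<close>

definition IR :: "'b set \<Rightarrow> 'b set set \<Rightarrow> 'c set \<Rightarrow> 'c set set \<Rightarrow> nat" where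
  "IR VH EH VG EG = (LEAST N. \<exists>EF :: nat set set.
      simple_graph {0..<N} EF \<and> ind_arrows {0..<N} EF VH EH VG EG)"

definition twoK2_V :: "nat set" where "twoK2_V = {0, 1, 2, 3}"
definition twoK2_E :: "nat set set" where "twoK2_E = {{0, 1}, {2, 3}}"

definition P4_V :: "nat set" where "P4_V = {0, 1, 2, 3}"
definition P4_E :: "nat set set" where "P4_E = {{0, 1}, {1, 2}, {2, 3}}"

definition star_V :: "nat \<Rightarrow> nat set" where "star_V n = {0..n}"
definition star_E :: "nat \<Rightarrow> nat set set" where "star_E n = {{0, i} | i. i \<in> {1..n}}"

definition Ktt_V :: "nat \<Rightarrow> nat set" where "Ktt_V t = {0..<2*t}"
definition Ktt_E :: "nat \<Rightarrow> nat set set" where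
  "Ktt_E t = {{i, j} | i j. i < t \<and> t \<le> j \<and> j < 2*t}"

end

theory Submission
  imports Defs "HOL-Library.FuncSet" "HOL-Real_Asymp.Real_Asymp"
begin


lemma copyI:
  assumes "inj_on f VH" "f ` VH \<subseteq> VF"
    "\<forall>u\<in>VH. \<forall>v\<in>VH. ({u,v} \<in> EH \<longleftrightarrow> {f u, f v} \<in> EF)"
    "\<forall>e\<in>EF. e \<subseteq> f ` VH \<longrightarrow> col e = c"
  shows "mono_induced_copy VH EH VF EF col c"
  unfolding mono_induced_copy_def
  apply (rule exI[of _ "f ` VH"], rule exI[of _ f])
  using assms inj_on_imp_bij_betw[OF assms(1)] by blast

lemma IR_le:
  assumes "simple_graph {0..<N} EF" "ind_arrows {0..<N} EF VH EH VG EG"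
  shows "IR VH EH VG EG \<le> N"
  unfolding IR_def by (rule Least_le) (rule exI[of _ EF], use assms in blast)

lemma copy_transfer:
  assumes g: "inj_on g V" and sg: "simple_graph V E"
    and cp: "mono_induced_copy VH EH V E (\<lambda>e. col (g ` e)) c"
  shows "mono_induced_copy VH EH (g ` V) ((\<lambda>e. g ` e) ` E) col c"
proof -
  from cp obtain S f where S: "S \<subseteq> V" "bij_betw f VH S"
    "\<forall>u\<in>VH. \<forall>v\<in>VH. ({u, v} \<in> EH \<longleftrightarrow> {f u, f v} \<in> E)"
    "\<forall>e\<in>E. e \<subseteq> S \<longrightarrow> col (g ` e) = c"
    unfolding mono_induced_copy_def by blast
  have EV: "\<forall>e\<in>E. e \<subseteq> V" using sg unfolding simple_graph_def by fastforce
  have injP: "inj_on (\<lambda>e. g ` e) (Pow V)"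
    by (rule inj_on_image_Pow[OF g])
  show ?thesis unfolding mono_induced_copy_def
  proof (intro exI conjI)
    show "g ` S \<subseteq> g ` V" using S(1) by blast
    show "bij_betw (g \<circ> f) VH (g ` S)"
      using bij_betw_trans[OF S(2) inj_on_imp_bij_betw[OF inj_on_subset[OF g S(1)]]] .
    show "\<forall>u\<in>VH. \<forall>v\<in>VH. ({u, v} \<in> EH \<longleftrightarrow> {(g \<circ> f) u, (g \<circ> f) v} \<in> (\<lambda>e. g ` e) ` E)"
    proof (intro ballI)
      fix u v assume uv: "u \<in> VH" "v \<in> VH"
      have fu: "f u \<in> V" "f v \<in> V" using uv S(1) bij_betwE[OF S(2)] by blast+
      have "{(g \<circ> f) u, (g \<circ> f) v} = g ` {f u, f v}" by auto
      moreover have "(g ` {f u, f v} \<in> (\<lambda>e. g ` e) ` E) \<longleftrightarrow> {f u, f v} \<in> E"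
      proof
        assume "g ` {f u, f v} \<in> (\<lambda>e. g ` e) ` E"
        then obtain e where e: "e \<in> E" "g ` {f u, f v} = g ` e" by blast
        have "e \<in> Pow V" using EV e(1) by blast
        moreover have "{f u, f v} \<in> Pow V" using fu by blast
        ultimately have "e = {f u, f v}" using inj_onD[OF injP e(2)[symmetric]] by blast
        then show "{f u, f v} \<in> E" using e by simp
      next
        assume "{f u, f v} \<in> E"
        then show "g ` {f u, f v} \<in> (\<lambda>e. g ` e) ` E" by (rule imageI)
      qed
      ultimately show "({u, v} \<in> EH) = ({(g \<circ> f) u, (g \<circ> f) v} \<in> (\<lambda>e. g ` e) ` E)"
        using S(3) uv by simp
    qed
    show "\<forall>e\<in>(\<lambda>e. g ` e) ` E. e \<subseteq> g ` S \<longrightarrow> col e = c"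
    proof (intro ballI impI)
      fix e' assume "e' \<in> (\<lambda>e. g ` e) ` E" "e' \<subseteq> g ` S"
      then obtain e where e: "e \<in> E" "e' = g ` e" by blast
      have "e \<subseteq> S"
      proof
        fix x assume "x \<in> e"
        then have "g x \<in> g ` S" using e \<open>e' \<subseteq> g ` S\<close> by blast
        moreover have "x \<in> V" using EV e \<open>x \<in> e\<close> by blast
        ultimately show "x \<in> S" using inj_on_image_mem_iff[OF g _ S(1)] by blast
      qed
      then show "col e' = c" using S(4) e by simp
    qed
  qed
qed

lemma arrow_transfer:
  assumes sg: "simple_graph V E" and ar: "ind_arrows V E VH EH VG EG"
  shows "IR VH EH VG EG \<le> card V"
proof -
  have fin: "finite V" using sg unfolding simple_graph_def by blast
  obtain g where g: "bij_betw g V {0..<card V}" using ex_bij_betw_finite_nat[OF fin] by blast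
  have gi: "inj_on g V" and gV: "g ` V = {0..<card V}" using g by (auto simp: bij_betw_def)
  define EF where "EF = (\<lambda>e. g ` e) ` E"
  have "simple_graph {0..<card V} EF"
    unfolding simple_graph_def EF_def
  proof (intro conjI ballI)
    fix e' assume "e' \<in> (\<lambda>e. g ` e) ` E"
    then obtain e where e: "e \<in> E" "e' = g ` e" by blast
    then obtain u v where "u \<in> V" "v \<in> V" "u \<noteq> v" "e = {u, v}" using sg unfolding simple_graph_def by blast
    moreover have "g u \<noteq> g v" using \<open>u \<in> V\<close> \<open>v \<in> V\<close> \<open>u \<noteq> v\<close> gi inj_on_contraD by metis
    moreover have "e' = {g u, g v}" using e \<open>e = {u, v}\<close> by simp
    moreover have "g u \<in> g ` V" "g v \<in> g ` V" using \<open>u \<in> V\<close> \<open>v \<in> V\<close> by simp_all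
    then have "g u \<in> {0..<card V}" "g v \<in> {0..<card V}" unfolding gV .
    ultimately show "\<exists>u v. u \<in> {0..<card V} \<and> v \<in> {0..<card V} \<and> u \<noteq> v \<and> e' = {u, v}"
      by blast
  qed simp
  moreover have "ind_arrows {0..<card V} EF VH EH VG EG"
    unfolding ind_arrows_def
  proof
    fix col :: "nat set \<Rightarrow> bool"
    have "mono_induced_copy VH EH V E (\<lambda>e. col (g ` e)) True \<or> mono_induced_copy VG EG V E (\<lambda>e. col (g ` e)) False"
      using ar[unfolded ind_arrows_def, rule_format, of "\<lambda>e. col (g ` e)"] .
    then have "mono_induced_copy VH EH (g ` V) EF col True \<or> mono_induced_copy VG EG (g ` V) EF col False"
      using copy_transfer[OF gi sg, of VH EH col True] copy_transfer[OF gi sg, of VG EG col False]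
      unfolding EF_def by blast
    then show "mono_induced_copy VH EH {0..<card V} EF col True \<or> mono_induced_copy VG EG {0..<card V} EF col False"
      unfolding gV .
  qed
  ultimately show ?thesis by (rule IR_le)
qed


definition bipE :: "'a set \<Rightarrow> 'b set \<Rightarrow> ('a \<Rightarrow> 'b \<Rightarrow> bool) \<Rightarrow> ('a + 'b) set set" where
  "bipE A B adj = {{Inl a, Inr b} | a b. a \<in> A \<and> b \<in> B \<and> adj a b}"

lemma bipE_LR[simp]: "{Inl a, Inr b} \<in> bipE A B adj \<longleftrightarrow> a \<in> A \<and> b \<in> B \<and> adj a b"
  unfolding bipE_def by (auto simp: doubleton_eq_iff)
lemma bipE_RL[simp]: "{Inr b, Inl a} \<in> bipE A B adj \<longleftrightarrow> a \<in> A \<and> b \<in> B \<and> adj a b"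
  unfolding bipE_def by (auto simp: doubleton_eq_iff)
lemma bipE_LL[simp]: "{Inl a, Inl a'} \<notin> bipE A B adj"
  unfolding bipE_def by (auto simp: doubleton_eq_iff)
lemma bipE_RR[simp]: "{Inr b, Inr b'} \<notin> bipE A B adj"
  unfolding bipE_def by (auto simp: doubleton_eq_iff)
lemma bipE_sing[simp]: "{x} \<notin> bipE A B adj"
  unfolding bipE_def by (auto simp: doubleton_eq_iff)

lemma bipE_elem: "e \<in> bipE A B adj \<Longrightarrow> \<exists>a b. a \<in> A \<and> b \<in> B \<and> adj a b \<and> e = {Inl a, Inr b}"
  unfolding bipE_def by blast

lemma simple_bip:
  assumes "finite A" "finite B"
  shows "simple_graph (A <+> B) (bipE A B adj)"
  unfolding simple_graph_def using assms by (auto simp: bipE_def)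

lemma card_bip: "finite A \<Longrightarrow> finite B \<Longrightarrow> card (A <+> B) = card A + card B"
  by (simp add: card_Plus)

lemma star_E_iff:
  "{u, v} \<in> star_E n \<longleftrightarrow> (u = 0 \<and> v \<in> {1..n}) \<or> (v = 0 \<and> u \<in> {1..n})"
  unfolding star_E_def by (auto simp: doubleton_eq_iff)

lemma star_copy:
  assumes a: "a \<in> A" and L: "L \<subseteq> B" "finite L" "card L = n"
    and blue: "\<forall>b\<in>L. adj a b \<and> \<not> col {Inl a, Inr b}"
  shows "mono_induced_copy (star_V n) (star_E n) (A <+> B) (bipE A B adj) col False"
proof -
  obtain h where h: "bij_betw h {0..<n} L" using ex_bij_betw_nat_finite[OF L(2)] L(3) by blast
  define f where "f i = (if i = 0 then Inl a else Inr (h (i - 1)))" for i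
  have hL: "i \<in> {1..n} \<Longrightarrow> h (i - 1) \<in> L" for i using h bij_betwE by fastforce
  have img: "f ` star_V n = insert (Inl a) (Inr ` L)"
  proof
    show "f ` star_V n \<subseteq> insert (Inl a) (Inr ` L)"
      using hL unfolding f_def star_V_def by (auto)
    show "insert (Inl a) (Inr ` L) \<subseteq> f ` star_V n"
    proof
      fix x assume "x \<in> insert (Inl a) (Inr ` L)"
      then consider "x = Inl a" | b where "b \<in> L" "x = Inr b" by blast
      then show "x \<in> f ` star_V n"
      proof cases
        case 1 then show ?thesis unfolding f_def star_V_def by (intro image_eqI[of _ _ 0]) auto
      next
        case 2
        then obtain i where "i < n" "h i = b" using h unfolding bij_betw_def by auto
        then show ?thesis using 2 unfolding f_def star_V_def by (intro image_eqI[of _ _ "Suc i"]) auto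
      qed
    qed
  qed
  show ?thesis
  proof (rule copyI)
    show "inj_on f (star_V n)"
    proof (rule inj_onI)
      fix x y assume xy: "x \<in> star_V n" "y \<in> star_V n" "f x = f y"
      show "x = y"
      proof (cases "x = 0 \<or> y = 0")
        case True then show ?thesis using xy unfolding f_def by (auto split: if_splits)
      next
        case False
        then have "h (x - 1) = h (y - 1)" using xy unfolding f_def by auto
        moreover have "x - 1 \<in> {0..<n}" "y - 1 \<in> {0..<n}" using xy False unfolding star_V_def by auto
        ultimately show ?thesis using h False unfolding bij_betw_def inj_on_def by fastforce
      qed
    qed
    show "f ` star_V n \<subseteq> A <+> B" using img a L by auto
    show "\<forall>u\<in>star_V n. \<forall>v\<in>star_V n. ({u, v} \<in> star_E n) = ({f u, f v} \<in> bipE A B adj)"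
    proof (intro ballI)
      fix u v assume uv: "u \<in> star_V n" "v \<in> star_V n"
      show "({u, v} \<in> star_E n) = ({f u, f v} \<in> bipE A B adj)"
      proof (cases "u = 0")
        case u0: True
        show ?thesis
        proof (cases "v = 0")
          case True then show ?thesis using u0 star_E_iff[of 0 0 n] by (simp add: f_def)
        next
          case False
          then have "v \<in> {1..n}" using uv unfolding star_V_def by auto
          then show ?thesis using u0 hL[of v] blue a L by (auto simp: star_E_iff f_def)
        qed
      next
        case u1: False
        show ?thesis
        proof (cases "v = 0")
          case True
          then have "u \<in> {1..n}" using uv u1 unfolding star_V_def by auto
          then show ?thesis using True hL[of u] blue a L by (auto simp: star_E_iff f_def)
        next
          case False then show ?thesis using u1 by (simp add: star_E_iff f_def)
        qed
      qed
    qed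
    show "\<forall>e\<in>bipE A B adj. e \<subseteq> f ` star_V n \<longrightarrow> col e = False"
    proof (intro ballI impI)
      fix e assume "e \<in> bipE A B adj" "e \<subseteq> f ` star_V n"
      then obtain a' b where e: "e = {Inl a', Inr b}" using bipE_elem by blast
      then have "a' = a" "b \<in> L" using \<open>e \<subseteq> f ` star_V n\<close> img by auto
      then show "col e = False" using blue e by simp
    qed
  qed
qed

lemma twoK2_copy:
  assumes "a1 \<in> A" "a2 \<in> A" "b1 \<in> B" "b2 \<in> B" "a1 \<noteq> a2" "b1 \<noteq> b2"
    "adj a1 b1" "adj a2 b2" "\<not> adj a1 b2" "\<not> adj a2 b1"
    "col {Inl a1, Inr b1}" "col {Inl a2, Inr b2}"
  shows "mono_induced_copy twoK2_V twoK2_E (A <+> B) (bipE A B adj) col True"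
proof -
  define f where "f i = (if i = (0::nat) then Inl a1 else if i = 1 then Inr b1 else if i = 2 then Inl a2 else Inr b2)" for i
  have img: "f ` twoK2_V = {Inl a1, Inr b1, Inl a2, Inr b2}" unfolding f_def twoK2_V_def by auto
  show ?thesis
  proof (rule copyI)
    show "inj_on f twoK2_V" using assms unfolding inj_on_def f_def twoK2_V_def by auto
    show "f ` twoK2_V \<subseteq> A <+> B" using img assms by auto
    show "\<forall>u\<in>twoK2_V. \<forall>v\<in>twoK2_V. ({u, v} \<in> twoK2_E) = ({f u, f v} \<in> bipE A B adj)"
      using assms unfolding twoK2_V_def twoK2_E_def f_def by (auto simp: doubleton_eq_iff insert_commute)
    show "\<forall>e\<in>bipE A B adj. e \<subseteq> f ` twoK2_V \<longrightarrow> col e = True"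
    proof (intro ballI impI)
      fix e assume "e \<in> bipE A B adj" "e \<subseteq> f ` twoK2_V"
      then obtain a b where e: "e = {Inl a, Inr b}" "adj a b" using bipE_elem by blast
      then have "a = a1 \<or> a = a2" "b = b1 \<or> b = b2" using \<open>e \<subseteq> f ` twoK2_V\<close> img by auto
      then show "col e = True" using e assms by auto
    qed
  qed
qed

lemma P4_copy:
  assumes "a1 \<in> A" "a2 \<in> A" "b1 \<in> B" "b2 \<in> B" "a1 \<noteq> a2" "b1 \<noteq> b2"
    "adj a1 b1" "adj a1 b2" "adj a2 b2" "\<not> adj a2 b1"
    "col {Inl a1, Inr b1}" "col {Inl a1, Inr b2}" "col {Inl a2, Inr b2}"
  shows "mono_induced_copy P4_V P4_E (A <+> B) (bipE A B adj) col True"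
proof -
  define f where "f i = (if i = (0::nat) then Inr b1 else if i = 1 then Inl a1 else if i = 2 then Inr b2 else Inl a2)" for i
  have img: "f ` P4_V = {Inr b1, Inl a1, Inr b2, Inl a2}" unfolding f_def P4_V_def by auto
  show ?thesis
  proof (rule copyI)
    show "inj_on f P4_V" using assms unfolding inj_on_def f_def P4_V_def by auto
    show "f ` P4_V \<subseteq> A <+> B" using img assms by auto
    show "\<forall>u\<in>P4_V. \<forall>v\<in>P4_V. ({u, v} \<in> P4_E) = ({f u, f v} \<in> bipE A B adj)"
      using assms unfolding P4_V_def P4_E_def f_def by (auto simp: doubleton_eq_iff insert_commute)
    show "\<forall>e\<in>bipE A B adj. e \<subseteq> f ` P4_V \<longrightarrow> col e = True"
    proof (intro ballI impI)
      fix e assume "e \<in> bipE A B adj" "e \<subseteq> f ` P4_V"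
      then obtain a b where e: "e = {Inl a, Inr b}" "adj a b" using bipE_elem by blast
      then have "a = a1 \<or> a = a2" "b = b1 \<or> b = b2" using \<open>e \<subseteq> f ` P4_V\<close> img by auto
      then show "col e = True" using e assms by auto
    qed
  qed
qed


lemma blue_or_red:
  assumes a: "a \<in> A" and fB: "finite B"
  shows "mono_induced_copy (star_V n) (star_E n) (A <+> B) (bipE A B adj) col False \<or>
         card {b\<in>B. adj a b} < card {b\<in>B. adj a b \<and> col {Inl a, Inr b}} + n"
proof (cases "n \<le> card {b\<in>B. adj a b \<and> \<not> col {Inl a, Inr b}}")
  case True
  then obtain L where L: "L \<subseteq> {b\<in>B. adj a b \<and> \<not> col {Inl a, Inr b}}" "card L = n" "finite L"
    by (rule obtain_subset_with_card_n)
  have "mono_induced_copy (star_V n) (star_E n) (A <+> B) (bipE A B adj) col False"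
  proof (rule star_copy[OF a _ L(3) L(2)])
    show "L \<subseteq> B" using L(1) by blast
    show "\<forall>b\<in>L. adj a b \<and> \<not> col {Inl a, Inr b}" using L(1) by blast
  qed
  then show ?thesis by blast
next
  case False
  have eq: "{b\<in>B. adj a b} = {b\<in>B. adj a b \<and> col {Inl a, Inr b}} \<union> {b\<in>B. adj a b \<and> \<not> col {Inl a, Inr b}}"
    by blast
  have "card {b\<in>B. adj a b} \<le> card {b\<in>B. adj a b \<and> col {Inl a, Inr b}} + card {b\<in>B. adj a b \<and> \<not> col {Inl a, Inr b}}"
    unfolding eq by (rule card_Un_le)
  then show ?thesis using False by linarith
qed

lemma Ktt_E_iff:
  "{u, v} \<in> Ktt_E t \<longleftrightarrow> (u < t \<and> t \<le> v \<and> v < 2*t) \<or> (v < t \<and> t \<le> u \<and> u < 2*t)"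
  unfolding Ktt_E_def by (auto simp: doubleton_eq_iff)

lemma Ktt_copy:
  assumes A': "A' \<subseteq> A" "finite A'" "card A' = t" and T: "T \<subseteq> B" "finite T" "card T = t"
    and red: "\<forall>a\<in>A'. \<forall>b\<in>T. adj a b \<and> col {Inl a, Inr b}"
  shows "mono_induced_copy (Ktt_V t) (Ktt_E t) (A <+> B) (bipE A B adj) col True"
proof -
  obtain h1 where h1: "bij_betw h1 {0..<t} A'" using ex_bij_betw_nat_finite[OF A'(2)] A'(3) by blast
  obtain h2 where h2: "bij_betw h2 {0..<t} T" using ex_bij_betw_nat_finite[OF T(2)] T(3) by blast
  define f where "f i = (if i < t then Inl (h1 i) else Inr (h2 (i - t)))" for i
  have h1A: "i < t \<Longrightarrow> h1 i \<in> A'" for i using h1 bij_betwE by fastforce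
  have h2T: "i < t \<Longrightarrow> h2 i \<in> T" for i using h2 bij_betwE by fastforce
  have img: "f ` Ktt_V t \<subseteq> Inl ` A' \<union> Inr ` T"
    unfolding f_def Ktt_V_def using h1A h2T by auto
  show ?thesis
  proof (rule copyI)
    show "inj_on f (Ktt_V t)"
    proof (rule inj_onI)
      fix x y assume xy: "x \<in> Ktt_V t" "y \<in> Ktt_V t" "f x = f y"
      show "x = y"
      proof (cases "x < t")
        case True
        then have "y < t" "h1 x = h1 y" using xy(3) unfolding f_def by (auto split: if_splits)
        then show ?thesis using True h1 unfolding bij_betw_def inj_on_def by auto
      next
        case False
        then have "\<not> y < t" "h2 (x - t) = h2 (y - t)" using xy(3) unfolding f_def by (auto split: if_splits)
        moreover have "x - t < t" "y - t < t" using xy(1,2) False \<open>\<not> y < t\<close> unfolding Ktt_V_def by auto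
        ultimately have "x - t = y - t" using h2 unfolding bij_betw_def inj_on_def by auto
        then show ?thesis using False \<open>\<not> y < t\<close> by auto
      qed
    qed
    have "Inl ` A' \<union> Inr ` T \<subseteq> A <+> B" using A'(1) T(1) by auto
    then show "f ` Ktt_V t \<subseteq> A <+> B" using img by (rule order_trans[rotated])
    show "\<forall>u\<in>Ktt_V t. \<forall>v\<in>Ktt_V t. ({u, v} \<in> Ktt_E t) = ({f u, f v} \<in> bipE A B adj)"
    proof (intro ballI)
      fix u v assume uv: "u \<in> Ktt_V t" "v \<in> Ktt_V t"
      then have uv': "u < 2*t" "v < 2*t" unfolding Ktt_V_def by auto
      show "({u, v} \<in> Ktt_E t) = ({f u, f v} \<in> bipE A B adj)"
      proof (cases "u < t"; cases "v < t")
        assume "u < t" "v < t" then show ?thesis by (simp add: Ktt_E_iff f_def)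
      next
        assume "u < t" "\<not> v < t"
        moreover have "h1 u \<in> A'" "h2 (v - t) \<in> T" using \<open>u < t\<close> \<open>\<not> v < t\<close> uv' h1A h2T by auto
        ultimately show ?thesis using uv' red A'(1) T(1) by (auto simp: Ktt_E_iff f_def)
      next
        assume "\<not> u < t" "v < t"
        moreover have "h1 v \<in> A'" "h2 (u - t) \<in> T" using \<open>v < t\<close> \<open>\<not> u < t\<close> uv' h1A h2T by auto
        ultimately show ?thesis using uv' red A'(1) T(1) by (auto simp: Ktt_E_iff f_def)
      next
        assume "\<not> u < t" "\<not> v < t" then show ?thesis by (simp add: Ktt_E_iff f_def)
      qed
    qed
    show "\<forall>e\<in>bipE A B adj. e \<subseteq> f ` Ktt_V t \<longrightarrow> col e = True"
    proof (intro ballI impI)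
      fix e assume "e \<in> bipE A B adj" "e \<subseteq> f ` Ktt_V t"
      then obtain a b where e: "e = {Inl a, Inr b}" using bipE_elem by blast
      then have "a \<in> A'" "b \<in> T" using \<open>e \<subseteq> f ` Ktt_V t\<close> img by auto
      then show "col e = True" using red e by simp
    qed
  qed
qed

lemma Ktt_pigeon:
  fixes R :: "'a \<Rightarrow> 'b set"
  assumes fA: "finite A" and fB: "finite B" and RB: "\<forall>a\<in>A. R a \<subseteq> B"
    and deg: "\<forall>a\<in>A. \<delta> \<le> card (R a)"
    and big: "(t - 1) * (card B choose t) < card A * (\<delta> choose t)"
  shows "\<exists>T A'. T \<subseteq> B \<and> finite T \<and> card T = t \<and> A' \<subseteq> A \<and> finite A' \<and> card A' = t \<and> (\<forall>a\<in>A'. T \<subseteq> R a)"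
proof (rule ccontr)
  assume no: "\<not> ?thesis"
  define Ts where "Ts = {T. T \<subseteq> B \<and> card T = t}"
  have fTs: "finite Ts" unfolding Ts_def using fB by simp
  have small: "card {a\<in>A. T \<subseteq> R a} \<le> t - 1" if "T \<in> Ts" for T
  proof (rule ccontr)
    assume "\<not> ?thesis"
    then have "t \<le> card {a\<in>A. T \<subseteq> R a}" by linarith
    then obtain A' where "A' \<subseteq> {a\<in>A. T \<subseteq> R a}" "card A' = t" "finite A'"
      by (rule obtain_subset_with_card_n)
    moreover have "finite T" using that fB unfolding Ts_def by (auto intro: finite_subset)
    ultimately show False using no that unfolding Ts_def by blast
  qed
  have eq1: "card {T\<in>Ts. T \<subseteq> R a} = card (R a) choose t" if "a \<in> A" for a
  proof -
    have "{T\<in>Ts. T \<subseteq> R a} = {T. T \<subseteq> R a \<and> card T = t}" using RB that unfolding Ts_def by blast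
    moreover have "finite (R a)" using RB that fB by (auto intro: finite_subset)
    ultimately show ?thesis by (simp add: n_subsets)
  qed
  have "card A * (\<delta> choose t) \<le> (\<Sum>a\<in>A. card (R a) choose t)"
  proof -
    have "(\<Sum>a\<in>A. \<delta> choose t) \<le> (\<Sum>a\<in>A. card (R a) choose t)"
      by (rule sum_mono) (use deg binomial_right_mono in blast)
    then show ?thesis by simp
  qed
  also have "\<dots> = (\<Sum>a\<in>A. card {T\<in>Ts. T \<subseteq> R a})" using eq1 by simp
  also have "\<dots> = (\<Sum>a\<in>A. \<Sum>T\<in>Ts. of_bool (T \<subseteq> R a))"
  proof (rule sum.cong[OF refl])
    fix a assume "a \<in> A"
    have "(\<Sum>T\<in>Ts. of_bool (T \<subseteq> R a)) = card (Ts \<inter> {T. T \<subseteq> R a})" using fTs by simp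
    moreover have "Ts \<inter> {T. T \<subseteq> R a} = {T\<in>Ts. T \<subseteq> R a}" by blast
    ultimately show "card {T\<in>Ts. T \<subseteq> R a} = (\<Sum>T\<in>Ts. of_bool (T \<subseteq> R a))" by simp
  qed
  also have "\<dots> = (\<Sum>T\<in>Ts. \<Sum>a\<in>A. of_bool (T \<subseteq> R a))" by (rule sum.swap)
  also have "\<dots> = (\<Sum>T\<in>Ts. card {a\<in>A. T \<subseteq> R a})"
  proof (rule sum.cong[OF refl])
    fix T assume "T \<in> Ts"
    have "(\<Sum>a\<in>A. of_bool (T \<subseteq> R a)) = card (A \<inter> {a. T \<subseteq> R a})" using fA by simp
    moreover have "A \<inter> {a. T \<subseteq> R a} = {a\<in>A. T \<subseteq> R a}" by blast
    ultimately show "(\<Sum>a\<in>A. of_bool (T \<subseteq> R a)) = card {a\<in>A. T \<subseteq> R a}" by simp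
  qed
  also have "\<dots> \<le> (\<Sum>T\<in>Ts. t - 1)" by (rule sum_mono) (use small in blast)
  also have "\<dots> = (t - 1) * (card B choose t)" using n_subsets[OF fB, of t] unfolding Ts_def by simp
  finally show False using big by linarith
qed

lemma Ktt_IR:
  fixes n m N t :: nat
  assumes n1: "1 \<le> n" and nN: "n \<le> N"
    and big: "(t - 1) * (N choose t) < m * ((N - n + 1) choose t)"
  shows "IR (Ktt_V t) (Ktt_E t) (star_V n) (star_E n) \<le> m + N"
proof -
  define A where "A = {0..<m}"
  define B where "B = {0..<N}"
  define adj where "adj = (\<lambda>(a::nat) (b::nat). True)"
  have sg: "simple_graph (A <+> B) (bipE A B adj)" unfolding A_def B_def by (rule simple_bip) auto
  have "ind_arrows (A <+> B) (bipE A B adj) (Ktt_V t) (Ktt_E t) (star_V n) (star_E n)"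
    unfolding ind_arrows_def
  proof
    fix col :: "(nat + nat) set \<Rightarrow> bool"
    show "mono_induced_copy (Ktt_V t) (Ktt_E t) (A <+> B) (bipE A B adj) col True \<or>
          mono_induced_copy (star_V n) (star_E n) (A <+> B) (bipE A B adj) col False"
    proof (cases "\<exists>a\<in>A. mono_induced_copy (star_V n) (star_E n) (A <+> B) (bipE A B adj) col False")
      case True then show ?thesis by blast
    next
      case False
      define R where "R a = {b\<in>B. adj a b \<and> col {Inl a, Inr b}}" for a
      have deg: "\<forall>a\<in>A. N - n + 1 \<le> card (R a)"
      proof
        fix a assume "a \<in> A"
        then have "card {b\<in>B. adj a b} < card (R a) + n"
          using blue_or_red[of a A B n adj col] False unfolding R_def B_def by auto
        moreover have "{b\<in>B. adj a b} = B" unfolding adj_def by simp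
        ultimately have "N < card (R a) + n" unfolding B_def by simp
        then show "N - n + 1 \<le> card (R a)" using nN by linarith
      qed
      have "\<exists>T A'. T \<subseteq> B \<and> finite T \<and> card T = t \<and> A' \<subseteq> A \<and> finite A' \<and> card A' = t \<and> (\<forall>a\<in>A'. T \<subseteq> R a)"
        by (rule Ktt_pigeon[OF _ _ _ deg]) (use big in \<open>auto simp: A_def B_def R_def\<close>)
      then obtain T A' where TA: "T \<subseteq> B" "finite T" "card T = t" "A' \<subseteq> A" "finite A'" "card A' = t"
        "\<forall>a\<in>A'. T \<subseteq> R a" by blast
      have "mono_induced_copy (Ktt_V t) (Ktt_E t) (A <+> B) (bipE A B adj) col True"
        by (rule Ktt_copy[OF TA(4,5,6) TA(1,2,3)]) (use TA(7) in \<open>auto simp: R_def\<close>)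
      then show ?thesis by blast
    qed
  qed
  then have "IR (Ktt_V t) (Ktt_E t) (star_V n) (star_E n) \<le> card (A <+> B)"
    by (rule arrow_transfer[OF sg])
  also have "card (A <+> B) = m + N" unfolding A_def B_def by (simp add: card_Plus)
  finally show ?thesis .
qed


lemma Ktt_main:
  fixes t :: nat
  assumes t2: "t \<ge> 2"
  shows "\<exists>c::real. c > 0 \<and> (\<exists>n0::nat. \<forall>n::nat. n > n0 \<longrightarrow>
     real (IR (Ktt_V t) (Ktt_E t) (star_V n) (star_E n)) \<le> real n + c * real n powr (1 - 1 / (2 * real t)))"
proof (intro exI conjI allI impI)
  show "(0::real) < 6 * real t" using t2 by simp
  fix n :: nat assume nbig: "n > (4*t)^(2*t)"
  define x where "x = real n"
  define e where "e = 1 - 1 / (2 * real t)"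
  define y where "y = x powr e"
  define s where "s = x powr (1 / (2 * real t))"
  define m where "m = t * nat \<lceil>sqrt x\<rceil>"
  define K where "K = 2 * t * nat \<lceil>y\<rceil>"
  define N where "N = n + K"
  have tpos: "real t \<ge> 2" using t2 by simp
  have "(4*t)^(2*t) \<ge> 4*t" by (rule self_le_power) (use t2 in auto)
  then have n4t: "n \<ge> 4 * t" using nbig by linarith
  have x1: "x \<ge> 1" using n4t t2 unfolding x_def by simp
  have xpos: "x > 0" using x1 by simp
  have e01: "1/2 \<le> e" "e \<le> 1" unfolding e_def using tpos by (auto simp: field_simps)
  have y1: "y \<ge> 1" unfolding y_def using x1 e01 by (simp add: ge_one_powr_ge_zero)
  have sqy: "sqrt x \<le> y" unfolding y_def using powr_mono[OF e01(1) x1] powr_half_sqrt[of x] xpos by simp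
  have s4t: "s \<ge> 4 * real t"
  proof -
    have "real ((4*t)^(2*t)) \<le> x" using nbig unfolding x_def by linarith
    then have "(real (4*t)^(2*t)) powr (1 / (2 * real t)) \<le> s" unfolding s_def
      by (intro powr_mono2) auto
    moreover have "(real (4*t)^(2*t)) powr (1 / (2 * real t)) = real (4*t)"
    proof -
      have "(real (4*t)^(2*t)) = real (4*t) powr (real (2*t))" using t2 powr_realpow[of "real (4*t)" "2*t"] by simp
      then show ?thesis using t2 by (simp add: powr_powr)
    qed
    ultimately show ?thesis by simp
  qed
  have ys: "y * s = x"
  proof -
    have "y * s = x powr (e + 1 / (2 * real t))" unfolding y_def s_def by (simp add: powr_add)
    also have "e + 1 / (2 * real t) = 1" unfolding e_def by simp
    finally show ?thesis using xpos by simp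
  qed
  have spos: "s > 0" using s4t tpos by linarith
  have yle: "2 * real t * y \<le> x / 2"
  proof -
    have "4 * real t * y \<le> s * y" using s4t y1 by (intro mult_right_mono) auto
    then show ?thesis using ys by (simp add: algebra_simps)
  qed
  have cy: "y \<le> real (nat \<lceil>y\<rceil>)" "real (nat \<lceil>y\<rceil>) \<le> y + 1"
    using y1 by (simp_all add: of_nat_nat le_of_int_ceiling of_int_ceiling_le_add_one)
  have cx: "sqrt x \<le> real (nat \<lceil>sqrt x\<rceil>)" "real (nat \<lceil>sqrt x\<rceil>) \<le> sqrt x + 1"
    using x1 by (simp_all add: of_nat_nat le_of_int_ceiling of_int_ceiling_le_add_one)
  have Keq: "real K = 2 * real t * real (nat \<lceil>y\<rceil>)" unfolding K_def by simp
  have meq: "real m = real t * real (nat \<lceil>sqrt x\<rceil>)" unfolding m_def by simp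
  have Kle: "real K \<le> 2 * real t * (y + 1)"
    unfolding Keq using cy(2) tpos by (intro mult_left_mono) auto
  have Kge: "real K \<ge> 2 * real t * y"
    unfolding Keq using cy(1) tpos by (intro mult_left_mono) auto
  have mle: "real m \<le> real t * (sqrt x + 1)"
    unfolding meq using cx(2) tpos by (intro mult_left_mono) auto
  have mge: "real m \<ge> real t * sqrt x"
    unfolding meq using cx(1) tpos by (intro mult_left_mono) auto
  have N2n: "real N \<le> 2 * x"
  proof -
    have h4: "4 * real t \<le> x" using n4t unfolding x_def by simp
    have "2 * real t * (y+1) = 2*real t*y + 2*real t" by (simp add: algebra_simps)
    then have "real K \<le> x" using Kle yle h4 by linarith
    then show ?thesis unfolding N_def x_def by simp
  qed
  have main: "(t - 1) * (N choose t) < m * ((N - n + 1) choose t)"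
  proof -
    have NK: "N - n + 1 = K + 1" unfolding N_def by simp
    have tN: "t \<le> N" using n4t unfolding N_def by simp
    have "2 * real t * 1 \<le> 2 * real t * y" using y1 tpos by (intro mult_left_mono) auto
    then have "real t \<le> real K" using Kge tpos by linarith
    then have tK: "t \<le> K + 1" by linarith
    have L: "real ((t - 1) * (N choose t)) \<le> (real t - 1) * (2 * x) ^ t"
    proof -
      have "N choose t \<le> N ^ t" by (rule binomial_le_pow[OF tN])
      then have "real (N choose t) \<le> real N ^ t" by (simp only: of_nat_le_iff of_nat_power[symmetric])
      also have "\<dots> \<le> (2 * x) ^ t" using N2n by (intro power_mono) auto
      finally have b: "real (N choose t) \<le> (2 * x) ^ t" .
      have "real ((t - 1) * (N choose t)) = (real t - 1) * real (N choose t)" using t2 by (simp add: of_nat_diff)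
      also have "\<dots> \<le> (real t - 1) * (2 * x) ^ t" using b tpos by (intro mult_left_mono) auto
      finally show ?thesis .
    qed
    have yt: "y ^ t * sqrt x = x ^ t"
    proof -
      have "y ^ t = x powr (real t * e)" unfolding y_def using xpos by (simp add: powr_power)
      also have "real t * e = real t - 1/2" unfolding e_def using tpos by (simp add: field_simps)
      finally have "y ^ t * sqrt x = x powr (real t - 1/2) * x powr (1/2)" using powr_half_sqrt[of x] xpos by simp
      also have "\<dots> = x powr (real t)" by (simp add: powr_add[symmetric])
      also have "\<dots> = x ^ t" using xpos by (simp add: powr_realpow)
      finally show ?thesis .
    qed
    have R: "real t * 2 ^ t * x ^ t \<le> real (m * ((N - n + 1) choose t))"
    proof -
      have "(2 * y) ^ t \<le> (real (K + 1) / real t) ^ t"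
        using Kge tpos y1 by (intro power_mono) (auto simp: field_simps)
      also have "\<dots> \<le> real ((K + 1) choose t)" by (rule binomial_ge_n_over_k_pow_k[OF tK])
      finally have b: "(2 * y) ^ t \<le> real ((K + 1) choose t)" .
      have "real t * 2 ^ t * x ^ t = real t * sqrt x * (2 * y) ^ t" using yt by (simp add: power_mult_distrib algebra_simps)
      also have "\<dots> \<le> real m * real ((K + 1) choose t)"
        using mge b y1 xpos tpos by (intro mult_mono) auto
      finally show ?thesis using NK by simp
    qed
    have "(real t - 1) * (2 * x) ^ t < real t * 2 ^ t * x ^ t"
      using xpos by (simp add: power_mult_distrib)
    then have "real ((t - 1) * (N choose t)) < real (m * ((N - n + 1) choose t))" using L R by linarith
    then show ?thesis by linarith
  qed
  have "IR (Ktt_V t) (Ktt_E t) (star_V n) (star_E n) \<le> m + N"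
    by (rule Ktt_IR[OF _ _ main]) (use n4t t2 in \<open>auto simp: N_def\<close>)
  then have "real (IR (Ktt_V t) (Ktt_E t) (star_V n) (star_E n)) \<le> real m + real N" by linarith
  also have "\<dots> \<le> x + 6 * real t * y"
  proof -
    have "real m + real N \<le> real t * (sqrt x + 1) + x + 2 * real t * (y + 1)"
      using mle Kle unfolding N_def x_def by simp
    also have "\<dots> \<le> x + 6 * real t * y"
    proof -
      have "real t * sqrt x \<le> real t * y" using sqy tpos by (intro mult_left_mono) auto
      moreover have "real t * 1 \<le> real t * y" using y1 tpos by (intro mult_left_mono) auto
      moreover have "real t * (sqrt x + 1) + x + 2 * real t * (y + 1) = real t * sqrt x + real t * 1 + x + 2 * (real t * y) + 2 * (real t * 1)"
        by (simp add: algebra_simps)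
      moreover have "x + 6 * real t * y = x + 6 * (real t * y)" by simp
      ultimately show ?thesis by linarith
    qed
    finally show ?thesis .
  qed
  finally show "real (IR (Ktt_V t) (Ktt_E t) (star_V n) (star_E n)) \<le> real n + 6 * real t * real n powr (1 - 1 / (2 * real t))"
    unfolding x_def y_def e_def by simp
qed


definition adjP :: "nat \<times> nat \<Rightarrow> (nat \<Rightarrow> nat) \<Rightarrow> bool" where
  "adjP a b \<longleftrightarrow> b (fst a) \<noteq> snd a"

lemma prod_ln:
  fixes x :: "nat \<Rightarrow> real" and p \<rho> :: real
  assumes p: "p > 0" and rho: "\<rho> > 0" and xb: "\<forall>j<d. 0 \<le> x j \<and> x j \<le> p"
    and le: "\<rho> \<le> (\<Prod>j<d. x j)"
  shows "(\<Sum>j<d. (p - x j)) \<le> p * ln (p ^ d / \<rho>)"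
proof -
  define S where "S = (\<Sum>j<d. (p - x j))"
  have "x j \<le> p * exp (x j / p - 1)" if "j < d" for j
  proof -
    have "x j / p \<le> exp (x j / p - 1)" using exp_ge_add_one_self[of "x j / p - 1"] by simp
    then show ?thesis using p by (simp add: field_simps)
  qed
  then have "(\<Prod>j<d. x j) \<le> (\<Prod>j<d. p * exp (x j / p - 1))"
    using xb by (intro prod_mono) auto
  also have "\<dots> = p ^ d * exp (\<Sum>j<d. (x j / p - 1))"
    by (simp add: prod.distrib exp_sum)
  also have "(\<Sum>j<d. (x j / p - 1)) = - S / p"
    unfolding S_def using p by (simp add: sum_divide_distrib[symmetric] sum_subtractf field_simps)
  finally have "\<rho> \<le> p ^ d * exp (- S / p)" using le by linarith
  then have "\<rho> * exp (S / p) \<le> p ^ d" by (simp add: exp_minus field_simps)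
  then have "exp (S / p) \<le> p ^ d / \<rho>" using rho by (simp add: field_simps)
  moreover have "p ^ d / \<rho> > 0" using rho p by simp
  ultimately have "ln (exp (S / p)) \<le> ln (p ^ d / \<rho>)" by (subst ln_le_cancel_iff) auto
  then have "S / p \<le> ln (p ^ d / \<rho>)" by simp
  then show ?thesis unfolding S_def using p by (simp add: field_simps)
qed

lemma card_fiber:
  assumes "i < d" "v < p"
  shows "card {b \<in> PiE {0..<d} (\<lambda>_. {0..<p}). b i = v} = p ^ (d - 1)"
proof -
  have "{b \<in> PiE {0..<d} (\<lambda>_. {0..<p}). b i = v} = PiE {0..<d} (\<lambda>j. if j = i then {v} else {0..<p})"
    using assms by (auto simp: PiE_iff extensional_def split: if_splits)
  then have "card {b \<in> PiE {0..<d} (\<lambda>_. {0..<p}). b i = v} = (\<Prod>j\<in>{0..<d}. card (if j = i then {v} else {0..<p}))"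
    by (simp add: card_PiE)
  also have "\<dots> = (\<Prod>j\<in>{0..<d}. if j = i then 1 else p)" by (intro prod.cong) auto
  also have "\<dots> = (\<Prod>j\<in>{0..<d} - {i}. if j = i then 1 else p)"
    using assms by (subst prod.remove[of _ i]) auto
  also have "\<dots> = (\<Prod>j\<in>{0..<d} - {i}. p)" by (intro prod.cong) auto
  also have "\<dots> = p ^ (d - 1)" using assms by simp
  finally show ?thesis .
qed

lemma prod_2K2:
  fixes d p :: nat and \<rho> :: real and R :: "nat \<times> nat \<Rightarrow> (nat \<Rightarrow> nat) set"
  assumes dp: "d \<ge> 1" "p \<ge> 1"
    and RB: "\<forall>a\<in>{0..<d}\<times>{0..<p}. R a \<subseteq> PiE {0..<d} (\<lambda>_. {0..<p}) \<and> (\<forall>b\<in>R a. adjP a b)"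
    and deg: "\<forall>a\<in>{0..<d}\<times>{0..<p}. \<rho> \<le> real (card (R a))"
    and rho: "\<rho> > 0" and cond: "ln (real p ^ d / \<rho>) \<le> real d / 2"
  shows "\<exists>a\<in>{0..<d}\<times>{0..<p}. \<exists>a'\<in>{0..<d}\<times>{0..<p}. a \<noteq> a' \<and>
           (\<exists>b1\<in>R a. \<not> adjP a' b1) \<and> (\<exists>b2\<in>R a'. \<not> adjP a b2)"
proof (rule ccontr)
  assume no: "\<not> ?thesis"
  define A where "A = {0..<d}\<times>{0..<p}"
  define Sa where "Sa a = Sigma {0..<d} (\<lambda>j. (\<lambda>b. b j) ` R a)" for a
  have Rsub: "b \<in> PiE {0..<d} (\<lambda>_. {0..<p})" if "a \<in> A" "b \<in> R a" for a b
    using RB that unfolding A_def by blast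
  have Rval: "b j < p" if "a \<in> A" "b \<in> R a" "j < d" for a b j
    using PiE_mem[OF Rsub[OF that(1,2)], of j] that(3) by simp
  have Rext: "b \<in> extensional {0..<d}" if "a \<in> A" "b \<in> R a" for a b
    using Rsub[OF that] by (simp add: PiE_iff)
  have finA: "finite A" unfolding A_def by simp
  have cardA: "card A = d * p" unfolding A_def by simp
  have Sa_iff: "a' \<in> Sa a \<longleftrightarrow> a' \<in> A \<and> (\<exists>b\<in>R a. \<not> adjP a' b)" if "a \<in> A" for a a'
  proof
    assume "a' \<in> Sa a"
    then obtain j b where "j < d" "b \<in> R a" "a' = (j, b j)" unfolding Sa_def by auto
    moreover have "b \<in> PiE {0..<d} (\<lambda>_. {0..<p})" using RB that \<open>b \<in> R a\<close> unfolding A_def by blast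
    then have "b j < p" using PiE_mem[of b "{0..<d}" "\<lambda>_. {0..<p}" j] \<open>j < d\<close> by simp
    ultimately show "a' \<in> A \<and> (\<exists>b\<in>R a. \<not> adjP a' b)" unfolding A_def adjP_def by auto
  next
    assume "a' \<in> A \<and> (\<exists>b\<in>R a. \<not> adjP a' b)"
    then obtain b where "a' \<in> A" "b \<in> R a" "b (fst a') = snd a'" unfolding adjP_def by auto
    then show "a' \<in> Sa a" unfolding Sa_def A_def by (cases a') force
  qed
  have notin: "a \<notin> Sa a" if "a \<in> A" for a
    using Sa_iff[OF that, of a] RB that unfolding A_def by blast
  have half: "real (d * p) / 2 \<le> real (card (Sa a))" if "a \<in> A" for a
  proof -
    define x where "x j = real (card ((\<lambda>b. b j) ` R a))" for j
    have Rfin: "finite (R a)"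
      by (rule finite_subset[of _ "PiE {0..<d} (\<lambda>_. {0..<p})"]) (use RB that in \<open>auto simp: A_def intro!: finite_PiE\<close>)
    have img: "(\<lambda>b. b j) ` R a \<subseteq> {0..<p}" if "j < d" for j
      using Rval[OF \<open>a \<in> A\<close> _ that] by auto
    have xb: "\<forall>j<d. 0 \<le> x j \<and> x j \<le> real p"
    proof (intro allI impI conjI)
      fix j assume "j < d"
      show "0 \<le> x j" unfolding x_def by simp
      have "card ((\<lambda>b. b j) ` R a) \<le> card {0..<p}" using img[OF \<open>j < d\<close>] by (intro card_mono) auto
      then show "x j \<le> real p" unfolding x_def by simp
    qed
    have "R a \<subseteq> PiE {0..<d} (\<lambda>j. (\<lambda>b. b j) ` R a)"
    proof
      fix b assume "b \<in> R a"
      moreover have "b \<in> extensional {0..<d}" by (rule Rext[OF \<open>a \<in> A\<close> \<open>b \<in> R a\<close>])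
      ultimately show "b \<in> PiE {0..<d} (\<lambda>j. (\<lambda>b. b j) ` R a)" by (simp add: PiE_iff)
    qed
    then have "card (R a) \<le> card (PiE {0..<d} (\<lambda>j. (\<lambda>b. b j) ` R a))"
      using Rfin by (intro card_mono) (auto intro!: finite_PiE)
    also have "\<dots> = (\<Prod>j\<in>{0..<d}. card ((\<lambda>b. b j) ` R a))" by (simp add: card_PiE)
    finally have c1: "real (card (R a)) \<le> real (\<Prod>j\<in>{0..<d}. card ((\<lambda>b. b j) ` R a))" by (simp only: of_nat_le_iff)
    have "real (\<Prod>j\<in>{0..<d}. card ((\<lambda>b. b j) ` R a)) = (\<Prod>j<d. x j)"
      unfolding x_def by (simp add: atLeast0LessThan)
    with c1 have "real (card (R a)) \<le> (\<Prod>j<d. x j)" by simp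
    then have rx: "\<rho> \<le> (\<Prod>j<d. x j)" using deg \<open>a \<in> A\<close> unfolding A_def by force
    have "(\<Sum>j<d. (real p - x j)) \<le> real p * ln (real p ^ d / \<rho>)"
      by (rule prod_ln) (use dp rho xb rx in auto)
    also have "\<dots> \<le> real p * (real d / 2)" using cond dp by (intro mult_left_mono) auto
    finally have s1: "(\<Sum>j<d. (real p - x j)) \<le> real p * (real d / 2)" .
    have "(\<Sum>j<d. (real p - x j)) = real d * real p - (\<Sum>j<d. x j)" by (simp add: sum_subtractf)
    moreover have "real (card (Sa a)) = (\<Sum>j<d. x j)"
    proof -
      have "card (Sa a) = (\<Sum>j\<in>{0..<d}. card ((\<lambda>b. b j) ` R a))"
        unfolding Sa_def using Rfin by (subst card_SigmaI) auto
      then show ?thesis unfolding x_def by (simp add: atLeast0LessThan)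
    qed
    ultimately show ?thesis using s1 by (simp add: algebra_simps)
  qed
  define P where "P = Sigma A Sa"
  have SaA: "Sa a \<subseteq> A" if "a \<in> A" for a using Sa_iff[OF that] by blast
  have finP: "finite P" unfolding P_def
    by (rule finite_SigmaI[OF finA]) (use SaA finA in \<open>blast intro: finite_subset\<close>)
  have "real (card P) = (\<Sum>a\<in>A. real (card (Sa a)))"
    unfolding P_def using finA SaA by (subst card_SigmaI) (auto intro: finite_subset)
  also have "\<dots> \<ge> (\<Sum>a\<in>A. real (d * p) / 2)" by (intro sum_mono half)
  finally have Pbig: "real (card P) \<ge> real (d * p) * real (d * p) / 2" using cardA by simp
  have disj: "P \<inter> converse P = {}"
  proof (rule ccontr)
    assume "P \<inter> converse P \<noteq> {}"
    then obtain a a' where "(a, a') \<in> P" "(a', a) \<in> P" by auto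
    then have "a \<in> A" "a' \<in> A" "a' \<in> Sa a" "a \<in> Sa a'" unfolding P_def by auto
    then have "a \<noteq> a'" "(\<exists>b1\<in>R a. \<not> adjP a' b1)" "(\<exists>b2\<in>R a'. \<not> adjP a b2)"
      using Sa_iff notin by blast+
    then show False using no \<open>a \<in> A\<close> \<open>a' \<in> A\<close> unfolding A_def by blast
  qed
  have sub: "P \<union> converse P \<subseteq> A \<times> A - (\<lambda>a. (a, a)) ` A"
    unfolding P_def using SaA notin by auto
  have "card (P \<union> converse P) = 2 * card P"
    using disj finP by (simp add: card_Un_disjoint)
  moreover have "card (P \<union> converse P) \<le> card (A \<times> A - (\<lambda>a. (a, a)) ` A)"
    using sub finA by (intro card_mono) auto
  moreover have "card (A \<times> A - (\<lambda>a. (a, a)) ` A) = card A * card A - card A"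
  proof -
    have "card ((\<lambda>a. (a, a)) ` A) = card A" by (rule card_image) (auto simp: inj_on_def)
    then show ?thesis using finA by (subst card_Diff_subset) (auto simp: card_cartesian_product)
  qed
  ultimately have "2 * card P \<le> card A * card A - card A" by simp
  moreover have "card A \<ge> 1" using cardA dp by simp
  moreover have "card A \<le> card A * card A" by simp
  ultimately have "2 * card P < card A * card A" by linarith
  then have "real (2 * card P) < real (card A) * real (card A)" by (simp only: of_nat_less_iff of_nat_mult[symmetric])
  then show False using Pbig cardA by simp
qed

lemma prod_P4:
  fixes d p :: nat and \<rho> :: real and R :: "nat \<times> nat \<Rightarrow> (nat \<Rightarrow> nat) set" and B :: "(nat \<Rightarrow> nat) set"
  assumes dp: "d \<ge> 1" "p \<ge> 1" and BP: "B \<subseteq> PiE {0..<d} (\<lambda>_. {0..<p})"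
    and RB: "\<forall>a\<in>{0..<d}\<times>{0..<p}. R a \<subseteq> B \<and> (\<forall>b\<in>R a. adjP a b)"
    and deg: "\<forall>a\<in>{0..<d}\<times>{0..<p}. \<rho> \<le> real (card (R a))"
    and rho: "\<rho> > 0" and cond: "real (card B) * ln (real p ^ d / \<rho>) < real d * \<rho>"
  shows "\<exists>a\<in>{0..<d}\<times>{0..<p}. \<exists>a'\<in>{0..<d}\<times>{0..<p}. a \<noteq> a' \<and>
           (\<exists>b1\<in>R a. \<exists>b2\<in>R a. b2 \<in> R a' \<and> \<not> adjP a' b1)"
proof (rule ccontr)
  assume no: "\<not> ?thesis"
  define A where "A = {0..<d}\<times>{0..<p}"
  define C where "C b = {a\<in>A. b \<in> R a}" for b
  have noP: "adjP a' b1" if "a \<in> A" "a' \<in> A" "a \<noteq> a'" "b1 \<in> R a" "b2 \<in> R a" "b2 \<in> R a'" for a a' b1 b2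
    using no that unfolding A_def by blast
  have finA: "finite A" unfolding A_def by simp
  have cardA: "card A = d * p" unfolding A_def by simp
  have finP: "finite (PiE {0..<d} (\<lambda>_. {0..<p}))" by (auto intro!: finite_PiE)
  have finB: "finite B" using BP finP by (rule finite_subset)
  have RBa: "R a \<subseteq> B" if "a \<in> A" for a using RB that unfolding A_def by blast
  have Radj: "adjP a b" if "a \<in> A" "b \<in> R a" for a b using RB that unfolding A_def by blast
  have dega: "\<rho> \<le> real (card (R a))" if "a \<in> A" for a using deg that unfolding A_def by blast
  have a00: "(0, 0) \<in> A" unfolding A_def using dp by auto
  have "card (R (0,0)) \<le> card B" using RBa[OF a00] finB by (rule card_mono[rotated])
  also have "card B \<le> card (PiE {0..<d} (\<lambda>_. {0..<p}))" using BP finP by (rule card_mono[rotated])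
  also have "\<dots> = p ^ d" by (simp add: card_PiE)
  finally have "real (card (R (0,0))) \<le> real (p ^ d)" by (simp only: of_nat_le_iff)
  then have "\<rho> \<le> real (p ^ d)" using dega[OF a00] by linarith
  then have "\<rho> \<le> real p ^ d" by simp
  then have lnpos: "0 \<le> ln (real p ^ d / \<rho>)" using rho by simp
  have Cbound: "real (card (C b)) \<le> real p * ln (real p ^ d / \<rho>)" if "b \<in> B" for b
  proof (cases "C b = {}")
    case True then show ?thesis using lnpos by simp
  next
    case False
    then obtain a0 where a0: "a0 \<in> A" "b \<in> R a0" unfolding C_def by blast
    define X where "X i = {v\<in>{0..<p}. (i, v) \<in> C b}" for i
    have Xsub: "X i \<subseteq> {0..<p}" for i unfolding X_def by blast
    have CX: "C b = Sigma {0..<d} X" unfolding C_def X_def A_def by auto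
    have cardC: "card (C b) = (\<Sum>i\<in>{0..<d}. card (X i))"
      unfolding CX by (subst card_SigmaI) (auto intro: finite_subset[OF Xsub])
    have sub: "R a0 \<subseteq> PiE {0..<d} (\<lambda>i. {0..<p} - X i)"
    proof
      fix b' assume b': "b' \<in> R a0"
      then have b'P: "b' \<in> PiE {0..<d} (\<lambda>_. {0..<p})" using RBa[OF a0(1)] BP by blast
      have "b' i \<notin> X i" if "i < d" for i
      proof
        assume "b' i \<in> X i"
        then have ai: "(i, b' i) \<in> A" "b \<in> R (i, b' i)" unfolding X_def C_def by auto
        show False
        proof (cases "(i, b' i) = a0")
          case True
          then show False using Radj[OF a0(1) b'] unfolding adjP_def by auto
        next
          case False
          have "\<not> adjP (i, b' i) b'" unfolding adjP_def by simp
          then show False using noP[OF a0(1) ai(1) _ b' a0(2) ai(2)] False by auto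
        qed
      qed
      then show "b' \<in> PiE {0..<d} (\<lambda>i. {0..<p} - X i)" using b'P by (auto simp: PiE_iff)
    qed
    have "card (R a0) \<le> card (PiE {0..<d} (\<lambda>i. {0..<p} - X i))"
      using sub by (rule card_mono[rotated]) (auto intro!: finite_PiE)
    also have "\<dots> = (\<Prod>i\<in>{0..<d}. card ({0..<p} - X i))" by (simp add: card_PiE)
    also have "\<dots> = (\<Prod>i\<in>{0..<d}. p - card (X i))"
      by (intro prod.cong refl) (simp add: card_Diff_subset[OF finite_subset[OF Xsub] Xsub])
    finally have c1: "card (R a0) \<le> (\<Prod>i\<in>{0..<d}. p - card (X i))" .
    have cX: "card (X i) \<le> p" for i using card_mono[OF finite_atLeastLessThan Xsub[of i]] by simp
    define x where "x i = real p - real (card (X i))" for i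
    have "real (\<Prod>i\<in>{0..<d}. p - card (X i)) = (\<Prod>i<d. x i)"
      unfolding x_def using cX by (simp add: atLeast0LessThan of_nat_diff)
    moreover have "real (card (R a0)) \<le> real (\<Prod>i\<in>{0..<d}. p - card (X i))" using c1 by (simp only: of_nat_le_iff)
    ultimately have rx: "\<rho> \<le> (\<Prod>i<d. x i)" using dega[OF a0(1)] by linarith
    have xb: "\<forall>j<d. 0 \<le> x j \<and> x j \<le> real p" unfolding x_def using cX by simp
    have "(\<Sum>j<d. (real p - x j)) \<le> real p * ln (real p ^ d / \<rho>)"
      by (rule prod_ln) (use dp rho xb rx in auto)
    moreover have "(\<Sum>j<d. (real p - x j)) = real (card (C b))"
      unfolding cardC x_def by (simp add: atLeast0LessThan)
    ultimately show ?thesis by simp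
  qed
  have "real (d * p) * \<rho> = (\<Sum>a\<in>A. \<rho>)" using cardA by simp
  also have "\<dots> \<le> (\<Sum>a\<in>A. real (card (R a)))" by (intro sum_mono dega)
  also have "\<dots> = (\<Sum>a\<in>A. \<Sum>b\<in>B. of_bool (b \<in> R a))"
  proof (rule sum.cong[OF refl])
    fix a assume "a \<in> A"
    have "(\<Sum>b\<in>B. of_bool (b \<in> R a)) = real (card (B \<inter> {b. b \<in> R a}))" using finB by simp
    moreover have "B \<inter> {b. b \<in> R a} = R a" using RBa[OF \<open>a \<in> A\<close>] by blast
    ultimately show "real (card (R a)) = (\<Sum>b\<in>B. of_bool (b \<in> R a))" by simp
  qed
  also have "\<dots> = (\<Sum>b\<in>B. \<Sum>a\<in>A. of_bool (b \<in> R a))" by (rule sum.swap)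
  also have "\<dots> = (\<Sum>b\<in>B. real (card (C b)))"
  proof (rule sum.cong[OF refl])
    fix b assume "b \<in> B"
    have "(\<Sum>a\<in>A. of_bool (b \<in> R a)) = real (card (A \<inter> {a. b \<in> R a}))" using finA by simp
    moreover have "A \<inter> {a. b \<in> R a} = C b" unfolding C_def by blast
    ultimately show "(\<Sum>a\<in>A. of_bool (b \<in> R a)) = real (card (C b))" by simp
  qed
  also have "\<dots> \<le> (\<Sum>b\<in>B. real p * ln (real p ^ d / \<rho>))" by (intro sum_mono Cbound)
  also have "\<dots> = real p * (real (card B) * ln (real p ^ d / \<rho>))" by simp
  finally have "real p * (real d * \<rho>) \<le> real p * (real (card B) * ln (real p ^ d / \<rho>))"
    by (simp add: algebra_simps)
  then have "real d * \<rho> \<le> real (card B) * ln (real p ^ d / \<rho>)" using dp by simp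
  then show False using cond by linarith
qed


lemma prod_IR:
  fixes n d p N :: nat and \<rho> :: real
  assumes dp: "d \<ge> 1" "p \<ge> 1" and NP: "N \<le> p ^ d" and rho: "\<rho> > 0"
    and rhoN: "\<rho> \<le> real N - real (p ^ (d - 1)) - real n + 1"
    and c2: "ln (real p ^ d / \<rho>) \<le> real d / 2"
    and c4: "real N * ln (real p ^ d / \<rho>) < real d * \<rho>"
  shows "IR twoK2_V twoK2_E (star_V n) (star_E n) \<le> d * p + N \<and> IR P4_V P4_E (star_V n) (star_E n) \<le> d * p + N"
proof -
  define PP where "PP = PiE {0..<d} (\<lambda>_. {0..<p})"
  have cPP: "card PP = p ^ d" unfolding PP_def by (simp add: card_PiE)
  obtain B where B: "B \<subseteq> PP" "card B = N" "finite B"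
    using obtain_subset_with_card_n[of N PP] NP cPP by auto
  define A where "A = {0..<d} \<times> {0..<p}"
  have finA: "finite A" unfolding A_def by simp
  have sg: "simple_graph (A <+> B) (bipE A B adjP)" using finA B(3) by (rule simple_bip)
  have cardV: "card (A <+> B) = d * p + N" using finA B by (simp add: card_Plus A_def)
  have key: "(\<exists>a\<in>A. mono_induced_copy (star_V n) (star_E n) (A <+> B) (bipE A B adjP) col False) \<or>
             (\<forall>a\<in>A. \<rho> \<le> real (card {b\<in>B. adjP a b \<and> col {Inl a, Inr b}}))" for col
  proof (cases "\<exists>a\<in>A. mono_induced_copy (star_V n) (star_E n) (A <+> B) (bipE A B adjP) col False")
    case True then show ?thesis by blast
  next
    case False
    have "\<rho> \<le> real (card {b\<in>B. adjP a b \<and> col {Inl a, Inr b}})" if a: "a \<in> A" for a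
    proof -
      have lt: "card {b\<in>B. adjP a b} < card {b\<in>B. adjP a b \<and> col {Inl a, Inr b}} + n"
        using blue_or_red[OF a B(3), of n adjP col] False a by blast
      obtain i v where iv: "a = (i, v)" "i < d" "v < p" using a unfolding A_def by auto
      have "{b\<in>B. \<not> adjP a b} \<subseteq> {b \<in> PP. b i = v}" using B(1) iv unfolding adjP_def by auto
      then have "card {b\<in>B. \<not> adjP a b} \<le> card {b \<in> PP. b i = v}"
        by (rule card_mono[rotated]) (auto simp: PP_def intro!: finite_PiE)
      also have "\<dots> = p ^ (d - 1)" unfolding PP_def by (rule card_fiber[OF iv(2,3)])
      finally have c1: "card {b\<in>B. \<not> adjP a b} \<le> p ^ (d - 1)" .
      have "B = {b\<in>B. adjP a b} \<union> {b\<in>B. \<not> adjP a b}" by blast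
      then have "card B \<le> card {b\<in>B. adjP a b} + card {b\<in>B. \<not> adjP a b}"
        by (metis card_Un_le)
      then have "N \<le> card {b\<in>B. adjP a b \<and> col {Inl a, Inr b}} + n - 1 + p ^ (d - 1)"
        using lt c1 B(2) by linarith
      then have "real N \<le> real (card {b\<in>B. adjP a b \<and> col {Inl a, Inr b}}) + real n - 1 + real (p ^ (d - 1))"
        using lt by linarith
      then show ?thesis using rhoN by linarith
    qed
    then show ?thesis by blast
  qed
  have Rprop: "\<forall>a\<in>{0..<d}\<times>{0..<p}. {b\<in>B. adjP a b \<and> col {Inl a, Inr b}} \<subseteq> B \<and>
      (\<forall>b\<in>{b\<in>B. adjP a b \<and> col {Inl a, Inr b}}. adjP a b)" for col
    by blast
  have Rprop2: "\<forall>a\<in>{0..<d}\<times>{0..<p}. {b\<in>B. adjP a b \<and> col {Inl a, Inr b}} \<subseteq> PiE {0..<d} (\<lambda>_. {0..<p}) \<and>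
      (\<forall>b\<in>{b\<in>B. adjP a b \<and> col {Inl a, Inr b}}. adjP a b)" for col
    using B(1) unfolding PP_def by blast
  have "ind_arrows (A <+> B) (bipE A B adjP) twoK2_V twoK2_E (star_V n) (star_E n)"
    unfolding ind_arrows_def
  proof
    fix col :: "(nat \<times> nat + (nat \<Rightarrow> nat)) set \<Rightarrow> bool"
    show "mono_induced_copy twoK2_V twoK2_E (A <+> B) (bipE A B adjP) col True \<or>
          mono_induced_copy (star_V n) (star_E n) (A <+> B) (bipE A B adjP) col False"
    proof (cases "\<exists>a\<in>A. mono_induced_copy (star_V n) (star_E n) (A <+> B) (bipE A B adjP) col False")
      case True then show ?thesis by blast
    next
      case False
      then have deg: "\<forall>a\<in>{0..<d}\<times>{0..<p}. \<rho> \<le> real (card {b\<in>B. adjP a b \<and> col {Inl a, Inr b}})"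
        using key[of col] unfolding A_def by blast
      obtain a a' b1 b2 where X: "a \<in> A" "a' \<in> A" "a \<noteq> a'"
        "b1 \<in> {b\<in>B. adjP a b \<and> col {Inl a, Inr b}}" "\<not> adjP a' b1"
        "b2 \<in> {b\<in>B. adjP a' b \<and> col {Inl a', Inr b}}" "\<not> adjP a b2"
        using prod_2K2[OF dp Rprop2 deg rho c2] unfolding A_def by blast
      have "mono_induced_copy twoK2_V twoK2_E (A <+> B) (bipE A B adjP) col True"
        by (rule twoK2_copy[of a A a' b1 B b2]) (use X in auto)
      then show ?thesis by blast
    qed
  qed
  then have r1: "IR twoK2_V twoK2_E (star_V n) (star_E n) \<le> d * p + N"
    using arrow_transfer[OF sg] cardV by simp
  have "ind_arrows (A <+> B) (bipE A B adjP) P4_V P4_E (star_V n) (star_E n)"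
    unfolding ind_arrows_def
  proof
    fix col :: "(nat \<times> nat + (nat \<Rightarrow> nat)) set \<Rightarrow> bool"
    show "mono_induced_copy P4_V P4_E (A <+> B) (bipE A B adjP) col True \<or>
          mono_induced_copy (star_V n) (star_E n) (A <+> B) (bipE A B adjP) col False"
    proof (cases "\<exists>a\<in>A. mono_induced_copy (star_V n) (star_E n) (A <+> B) (bipE A B adjP) col False")
      case True then show ?thesis by blast
    next
      case False
      then have deg: "\<forall>a\<in>{0..<d}\<times>{0..<p}. \<rho> \<le> real (card {b\<in>B. adjP a b \<and> col {Inl a, Inr b}})"
        using key[of col] unfolding A_def by blast
      have c4': "real (card B) * ln (real p ^ d / \<rho>) < real d * \<rho>" using c4 B(2) by simp
      have BP: "B \<subseteq> PiE {0..<d} (\<lambda>_. {0..<p})" using B(1) unfolding PP_def .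
      obtain a a' b1 b2 where X: "a \<in> A" "a' \<in> A" "a \<noteq> a'"
        "b1 \<in> {b\<in>B. adjP a b \<and> col {Inl a, Inr b}}" "b2 \<in> {b\<in>B. adjP a b \<and> col {Inl a, Inr b}}"
        "b2 \<in> {b\<in>B. adjP a' b \<and> col {Inl a', Inr b}}" "\<not> adjP a' b1"
        using prod_P4[OF dp BP Rprop deg rho c4'] unfolding A_def by blast
      have "mono_induced_copy P4_V P4_E (A <+> B) (bipE A B adjP) col True"
        by (rule P4_copy[of a A a' b1 B b2]) (use X in auto)
      then show ?thesis by blast
    qed
  qed
  then have r2: "IR P4_V P4_E (star_V n) (star_E n) \<le> d * p + N"
    using arrow_transfer[OF sg] cardV by simp
  show ?thesis using r1 r2 by blast
qed


lemma asym_ev: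
  "eventually (\<lambda>x::real. 8 \<le> x \<and> 8 \<le> ln x powr (1/4) \<and>
      (ln x powr (1/4) + 1)^2 \<le> exp (ln (2*x) / (ln x powr (1/4) + 1)^2) \<and>
      4 \<le> exp (ln (2*x) / (ln x powr (1/4) + 1)^2) \<and>
      6*x / exp (ln (2*x) / (ln x powr (1/4) + 1)^2) + (ln x powr (1/4) + 1)^2 * (exp (ln (2*x) / ln x powr (1/2)) + 1) + 1
        \<le> 3 * x * ln x powr (-1/4)) at_top"
proof -
  have 1: "eventually (\<lambda>x::real. 8 \<le> x) at_top" by real_asymp
  have 2: "eventually (\<lambda>x::real. 8 \<le> ln x powr (1/4)) at_top" by real_asymp
  have 3: "eventually (\<lambda>x::real. (ln x powr (1/4) + 1)^2 \<le> exp (ln (2*x) / (ln x powr (1/4) + 1)^2)) at_top"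
    by real_asymp
  have 4: "eventually (\<lambda>x::real. 4 \<le> exp (ln (2*x) / (ln x powr (1/4) + 1)^2)) at_top" by real_asymp
  have 5: "eventually (\<lambda>x::real. 6*x / exp (ln (2*x) / (ln x powr (1/4) + 1)^2) + (ln x powr (1/4) + 1)^2 * (exp (ln (2*x) / ln x powr (1/2)) + 1) + 1
        \<le> 3 * x * ln x powr (-1/4)) at_top" by real_asymp
  show ?thesis using 1 2 3 4 5 by eventually_elim blast
qed

lemma prod_main_n:
  fixes n :: nat
  assumes ev: "8 \<le> real n \<and> 8 \<le> ln (real n) powr (1/4) \<and>
      (ln (real n) powr (1/4) + 1)^2 \<le> exp (ln (2*real n) / (ln (real n) powr (1/4) + 1)^2) \<and>
      4 \<le> exp (ln (2*real n) / (ln (real n) powr (1/4) + 1)^2) \<and>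
      6*real n / exp (ln (2*real n) / (ln (real n) powr (1/4) + 1)^2) + (ln (real n) powr (1/4) + 1)^2 * (exp (ln (2*real n) / ln (real n) powr (1/2)) + 1) + 1
        \<le> 3 * real n * ln (real n) powr (-1/4)"
  shows "real (IR twoK2_V twoK2_E (star_V n) (star_E n)) \<le> real n + 9 * real n * ln (real n) powr (-1/4) \<and>
         real (IR P4_V P4_E (star_V n) (star_E n)) \<le> real n + 9 * real n * ln (real n) powr (-1/4)"
proof -
  define L where "L = ln (real n)"
  define q where "q = L powr (1/4)"
  define D2 where "D2 = (q + 1)^2"
  define X1 where "X1 = exp (ln (2 * real n) / D2)"
  define X2 where "X2 = exp (ln (2 * real n) / L powr (1/2))"
  have n8: "8 \<le> real n" and q8: "8 \<le> q" and D2X1: "D2 \<le> X1" and X14: "4 \<le> X1"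
    and big: "6 * real n / X1 + D2 * (X2 + 1) + 1 \<le> 3 * real n * L powr (-1/4)"
    using ev unfolding L_def q_def D2_def X1_def X2_def by blast+
  have npos: "real n > 0" using n8 by simp
  have Lpos: "L > 0" unfolding L_def using n8 by simp
  have ln2n: "ln (2 * real n) > 0" using n8 by simp
  define k where "k = nat \<lceil>q\<rceil>"
  define d where "d = k ^ 2"
  define x where "x = exp (ln (2 * real n) / real d)"
  define p where "p = nat \<lceil>x\<rceil>"
  define P where "P = p ^ d"
  define m where "m = nat \<lceil>real P / real k\<rceil>"
  define N where "N = n + p ^ (d - 1) + m"
  define \<rho> where "\<rho> = real P / real k"
  have kq: "q \<le> real k" "real k \<le> q + 1" unfolding k_def using q8
    by (simp_all add: of_nat_nat le_of_int_ceiling of_int_ceiling_le_add_one)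
  have k8: "real k \<ge> 8" using kq q8 by linarith
  have k1: "k \<ge> 1" using k8 by simp
  have dreal: "real d = real k ^ 2" unfolding d_def by simp
  have d1: "d \<ge> 1" unfolding d_def using k1 by simp
  have dpos: "real d > 0" using d1 by simp
  have qsq: "q ^ 2 = L powr (1/2)"
    unfolding q_def using powr_power[of L "1/4" 2] Lpos by simp
  have dlow: "L powr (1/2) \<le> real d" unfolding dreal qsq[symmetric] using kq q8 by (intro power_mono) auto
  have dup: "real d \<le> D2" unfolding dreal D2_def using kq q8 by (intro power_mono) auto
  have Lh: "L powr (1/2) > 0" using Lpos by simp
  have xlow: "X1 \<le> x" unfolding X1_def x_def exp_le_cancel_iff
    by (rule divide_left_mono) (use dup ln2n dpos in auto)
  have xup: "x \<le> X2" unfolding X2_def x_def exp_le_cancel_iff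
    by (rule divide_left_mono) (use dlow ln2n Lh dpos in auto)
  have x4: "x \<ge> 4" using xlow X14 by linarith
  have px: "x \<le> real p" "real p \<le> x + 1" unfolding p_def using x4
    by (simp_all add: of_nat_nat le_of_int_ceiling of_int_ceiling_le_add_one)
  have p4: "real p \<ge> 4" using px x4 by linarith
  have p1: "p \<ge> 1" using p4 by simp
  have xd: "x ^ d = 2 * real n"
  proof -
    have "x ^ d = exp (real d * (ln (2 * real n) / real d))" unfolding x_def by (simp only: exp_of_nat_mult)
    also have "\<dots> = 2 * real n" using dpos npos by simp
    finally show ?thesis .
  qed
  have Pre: "real P = real p ^ d" unfolding P_def by simp
  have Plow: "real P \<ge> 2 * real n" unfolding Pre xd[symmetric] using px x4 by (intro power_mono) auto
  have Pup: "real P \<le> 6 * real n"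
  proof -
    have h0: "real P \<le> (x + 1) ^ d" unfolding Pre using px p4 by (intro power_mono) auto
    have e1: "x * (1 + 1 / x) = x + 1" using x4 by (simp add: field_simps)
    have h1: "(x + 1) ^ d = x ^ d * (1 + 1 / x) ^ d"
    proof -
      have "(x + 1) ^ d = (x * (1 + 1 / x)) ^ d" by (simp only: e1)
      also have "\<dots> = x ^ d * (1 + 1 / x) ^ d" by (rule power_mult_distrib)
      finally show ?thesis .
    qed
    have h2: "(1 + 1 / x) ^ d \<le> exp (1 / x) ^ d"
      by (rule power_mono) (use x4 exp_ge_add_one_self[of "1/x"] in auto)
    have h3: "exp (1 / x) ^ d = exp (real d * (1 / x))" by (rule exp_of_nat_mult[symmetric])
    have "real d \<le> x" using dup D2X1 xlow by linarith
    then have "real d * (1 / x) \<le> 1" using x4 by (simp add: field_simps)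
    then have h4: "exp (real d * (1 / x)) \<le> 3" using exp_le by (meson exp_le_cancel_iff order_trans)
    have "(1 + 1 / x) ^ d \<le> 3" using h2 h3 h4 by linarith
    then have "x ^ d * (1 + 1 / x) ^ d \<le> x ^ d * 3" using x4 by (intro mult_left_mono) auto
    then show ?thesis using h0 h1 xd by linarith
  qed
  have Ppos: "real P > 0" using Plow npos by linarith
  have Pp: "real (p ^ (d - 1)) = real P / real p"
  proof -
    have "p ^ (d - 1) * p = P" unfolding P_def using d1 by (cases d) (auto simp: mult.commute)
    then have "real (p ^ (d - 1)) * real p = real P" by (simp only: of_nat_mult[symmetric])
    then show ?thesis using p4 by (simp add: field_simps)
  qed
  have mb: "real P / real k \<le> real m" "real m \<le> real P / real k + 1" unfolding m_def using Ppos k8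
    by (simp_all add: of_nat_nat le_of_int_ceiling of_int_ceiling_le_add_one)
  have Nre: "real N = real n + real P / real p + real m" unfolding N_def using Pp by simp
  have NP: "N \<le> p ^ d"
  proof -
    have "real P / real p \<le> real P / 4" using p4 Ppos by (intro divide_left_mono) auto
    moreover have "real P / real k \<le> real P / 8" using k8 Ppos by (intro divide_left_mono) auto
    ultimately have "real N \<le> real P" using Nre mb Plow n8 by linarith
    then have "N \<le> P" by (simp only: of_nat_le_iff)
    then show ?thesis unfolding P_def .
  qed
  have rho: "\<rho> > 0" unfolding \<rho>_def using Ppos k8 by simp
  have rhoN: "\<rho> \<le> real N - real (p ^ (d - 1)) - real n + 1" unfolding \<rho>_def using mb Nre Pp by simp
  have lnk: "ln (real p ^ d / \<rho>) = ln (real k)" unfolding \<rho>_def Pre[symmetric] using Ppos k8 by simp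
  have lnkk: "ln (real k) < real k" using k8 by simp
  have lnk0: "ln (real k) \<ge> 0" using k8 by simp
  have c2: "ln (real p ^ d / \<rho>) \<le> real d / 2"
  proof -
    have "real k \<le> real k ^ 2 / 2" using k8 by (simp add: power2_eq_square field_simps)
    then show ?thesis unfolding lnk dreal using lnkk by linarith
  qed
  have c4: "real N * ln (real p ^ d / \<rho>) < real d * \<rho>"
  proof -
    have "real N * ln (real k) \<le> real P * ln (real k)"
      using NP lnk0 unfolding P_def by (intro mult_right_mono) auto
    also have "\<dots> < real P * real k" using lnkk Ppos by simp
    also have "\<dots> = real d * \<rho>" unfolding dreal \<rho>_def using k8 by (simp add: power2_eq_square)
    finally show ?thesis unfolding lnk .
  qed
  have IRb: "IR twoK2_V twoK2_E (star_V n) (star_E n) \<le> d * p + N \<and> IR P4_V P4_E (star_V n) (star_E n) \<le> d * p + N"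
    by (rule prod_IR[OF d1 p1 NP rho rhoN c2 c4])
  have tot: "real (d * p + N) \<le> real n + 9 * real n * L powr (-1/4)"
  proof -
    have a1: "real d * real p \<le> D2 * (X2 + 1)"
      using dup px xup dpos by (intro mult_mono) auto
    have a2: "real P / real p \<le> 6 * real n / X1"
    proof -
      have "real P / real p \<le> 6 * real n / real p" using Pup p4 by (simp add: divide_right_mono)
      also have "\<dots> \<le> 6 * real n / X1" using px xlow X14 npos by (intro divide_left_mono) auto
      finally show ?thesis .
    qed
    have a3: "real P / real k \<le> 6 * real n * L powr (-1/4)"
    proof -
      have "real P / real k \<le> 6 * real n / real k" using Pup k8 by (intro divide_right_mono) auto
      also have "\<dots> \<le> 6 * real n / q" using kq q8 npos by (intro divide_left_mono) auto
      finally have "real P / real k \<le> 6 * real n / q" .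
      also have "6 * real n / q = 6 * real n * L powr (-1/4)" unfolding q_def by (simp add: powr_minus_divide)
      finally show ?thesis .
    qed
    have "real (d * p + N) = real d * real p + real n + real P / real p + real m" using Nre by simp
    also have "\<dots> \<le> real n + (6 * real n / X1 + D2 * (X2 + 1) + 1) + 6 * real n * L powr (-1/4)"
      using a1 a2 a3 mb by linarith
    also have "\<dots> \<le> real n + 9 * real n * L powr (-1/4)" using big by linarith
    finally show ?thesis .
  qed
  have i1: "real (IR twoK2_V twoK2_E (star_V n) (star_E n)) \<le> real (d * p + N)" using IRb by (simp only: of_nat_le_iff)
  have i2: "real (IR P4_V P4_E (star_V n) (star_E n)) \<le> real (d * p + N)" using IRb by (simp only: of_nat_le_iff)
  have tot': "real (d * p + N) \<le> real n + 9 * real n * ln (real n) powr (-1/4)" using tot unfolding L_def .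
  show ?thesis
  proof
    show "real (IR twoK2_V twoK2_E (star_V n) (star_E n)) \<le> real n + 9 * real n * ln (real n) powr (-1/4)"
      using i1 tot' by linarith
    show "real (IR P4_V P4_E (star_V n) (star_E n)) \<le> real n + 9 * real n * ln (real n) powr (-1/4)"
      using i2 tot' by linarith
  qed
qed

lemma prod_main:
  "\<exists>n0::nat. \<forall>n::nat. n > n0 \<longrightarrow>
     real (IR twoK2_V twoK2_E (star_V n) (star_E n)) \<le> real n + 9 * real n * ln (real n) powr (-1/4) \<and>
     real (IR P4_V P4_E (star_V n) (star_E n)) \<le> real n + 9 * real n * ln (real n) powr (-1/4)"
proof -
  have "\<exists>X0::real. \<forall>x::real\<ge>X0. 8 \<le> x \<and> 8 \<le> ln x powr (1/4) \<and>
      (ln x powr (1/4) + 1)^2 \<le> exp (ln (2*x) / (ln x powr (1/4) + 1)^2) \<and>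
      4 \<le> exp (ln (2*x) / (ln x powr (1/4) + 1)^2) \<and>
      6*x / exp (ln (2*x) / (ln x powr (1/4) + 1)^2) + (ln x powr (1/4) + 1)^2 * (exp (ln (2*x) / ln x powr (1/2)) + 1) + 1
        \<le> 3 * x * ln x powr (-1/4)"
    using asym_ev unfolding eventually_at_top_linorder .
  then obtain X0 :: real where X0: "\<forall>x::real\<ge>X0. 8 \<le> x \<and> 8 \<le> ln x powr (1/4) \<and>
      (ln x powr (1/4) + 1)^2 \<le> exp (ln (2*x) / (ln x powr (1/4) + 1)^2) \<and>
      4 \<le> exp (ln (2*x) / (ln x powr (1/4) + 1)^2) \<and>
      6*x / exp (ln (2*x) / (ln x powr (1/4) + 1)^2) + (ln x powr (1/4) + 1)^2 * (exp (ln (2*x) / ln x powr (1/2)) + 1) + 1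
        \<le> 3 * x * ln x powr (-1/4)" ..
  show ?thesis
  proof (intro exI allI impI)
    fix n :: nat assume n: "n > nat \<lceil>X0\<rceil>"
    have "real (nat \<lceil>X0\<rceil>) < real n" using n by (simp only: of_nat_less_iff)
    moreover have "X0 \<le> real_of_int \<lceil>X0\<rceil>" by (rule le_of_int_ceiling)
    moreover have "real_of_int \<lceil>X0\<rceil> \<le> real (nat \<lceil>X0\<rceil>)" by (cases "\<lceil>X0\<rceil> \<ge> 0") auto
    ultimately have "X0 \<le> real n" by linarith
    from X0[rule_format, OF this] show "real (IR twoK2_V twoK2_E (star_V n) (star_E n)) \<le> real n + 9 * real n * ln (real n) powr (-1/4) \<and>
     real (IR P4_V P4_E (star_V n) (star_E n)) \<le> real n + 9 * real n * ln (real n) powr (-1/4)"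
      by (rule prod_main_n)
  qed
qed


theorem theorem3:
  fixes t :: nat
  assumes "t \<ge> 2"
  shows "\<exists>c::real. c > 0 \<and> (\<exists>n0::nat. \<forall>n::nat. n > n0 \<longrightarrow>
     real (IR twoK2_V twoK2_E (star_V n) (star_E n)) \<le> real n + c * real n * ln (real n) powr (-1/4) \<and>
     real (IR P4_V P4_E (star_V n) (star_E n)) \<le> real n + c * real n * ln (real n) powr (-1/4) \<and>
     real (IR (Ktt_V t) (Ktt_E t) (star_V n) (star_E n)) \<le> real n + c * real n powr (1 - 1 / (2 * real t)))"
proof -
  from prod_main obtain n1 :: nat where n1: "\<forall>n::nat. n > n1 \<longrightarrow> real (IR twoK2_V twoK2_E (star_V n) (star_E n)) \<le> real n + 9 * real n * ln (real n) powr (-1/4) \<and> real (IR P4_V P4_E (star_V n) (star_E n)) \<le> real n + 9 * real n * ln (real n) powr (-1/4)" ..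
  from Ktt_main[OF assms] obtain c3 :: real where c3all: "c3 > 0 \<and> (\<exists>n0::nat. \<forall>n::nat. n > n0 \<longrightarrow> real (IR (Ktt_V t) (Ktt_E t) (star_V n) (star_E n)) \<le> real n + c3 * real n powr (1 - 1 / (2 * real t)))" ..
  from c3all have c3: "c3 > 0" by (rule conjunct1)
  from c3all have "\<exists>n0::nat. \<forall>n::nat. n > n0 \<longrightarrow> real (IR (Ktt_V t) (Ktt_E t) (star_V n) (star_E n)) \<le> real n + c3 * real n powr (1 - 1 / (2 * real t))" by (rule conjunct2)
  then obtain n3 :: nat where n3: "\<forall>n::nat. n > n3 \<longrightarrow> real (IR (Ktt_V t) (Ktt_E t) (star_V n) (star_E n)) \<le> real n + c3 * real n powr (1 - 1 / (2 * real t))" ..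
  define c where "c = max 9 c3"
  have c9: "9 \<le> c" and cc3: "c3 \<le> c" unfolding c_def by simp_all
  show ?thesis
  proof (intro exI conjI allI impI)
    show "c > 0" using c9 by simp
    fix n :: nat assume n: "n > max n1 n3"
    then have nn1: "n > n1" and nn3: "n > n3" by simp_all
    have h12: "real (IR twoK2_V twoK2_E (star_V n) (star_E n)) \<le> real n + 9 * real n * ln (real n) powr (-1/4) \<and> real (IR P4_V P4_E (star_V n) (star_E n)) \<le> real n + 9 * real n * ln (real n) powr (-1/4)" using n1 nn1 by blast
    have h3: "real (IR (Ktt_V t) (Ktt_E t) (star_V n) (star_E n)) \<le> real n + c3 * real n powr (1 - 1 / (2 * real t))" using n3 nn3 by blast
    have A: "9 * real n * ln (real n) powr (-1/4) \<le> c * real n * ln (real n) powr (-1/4)"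
      by (intro mult_right_mono) (use c9 in auto)
    have B: "c3 * real n powr (1 - 1 / (2 * real t)) \<le> c * real n powr (1 - 1 / (2 * real t))"
      by (intro mult_right_mono) (use cc3 in auto)
    show "real (IR twoK2_V twoK2_E (star_V n) (star_E n)) \<le> real n + c * real n * ln (real n) powr (-1/4)"
      using h12 A by linarith
    show "real (IR P4_V P4_E (star_V n) (star_E n)) \<le> real n + c * real n * ln (real n) powr (-1/4)"
      using h12 A by linarith
    show "real (IR (Ktt_V t) (Ktt_E t) (star_V n) (star_E n)) \<le> real n + c * real n powr (1 - 1 / (2 * real t))"
      using h3 B by linarith
  qed
qed

end
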